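(* Let $\Gamma$ be a lattice satisfying the standing assumptions below. Let $\rho=(f_1,\dots,f_m)$, $m\ge 2$, be a face path with volume sequence $\Lambda(\rho)=(\nu_1,\dots,\nu_{m-1})$, and suppose there is a volume $\nu_0\notin\Lambda(\rho)$ with $f_1,f_m\in\partial(\nu_0)$ (i.e. $\rho$ is a simple face cycle). Then $W^Z(\rho)=\prod_{i=1}^m Z_{f_i}$ commutes with every element of the stabilizer group of the 3D toric code on $\Gamma$, i.e. it is a stabilizer or a logical operator.
   Context: $\Gamma$ is a finite, connected three-dimensional cell complex (lattice) with vertices $C_0(\Gamma)$, edges $C_1(\Gamma)$ (partial edges, incident on only one vertex, are allowed at the boundary), faces $C_2(\Gamma)$ and volumes $C_3(\Gamma)$. For a face $f$, $\partial(f)$ is its set of boundary edges; for a volume $\nu$, $\partial(\nu)$ is its set of boundary faces; for an edge $e$, $\iota(e)$ is the set of faces containing $e$ in their boundary. Every face lies in the boundary of at most two volumes. Standing assumptions: (L1) $\Gamma$ has no boundaries in its interior; (L2) the boundary of every face of $\Gamma$ and of its dual $\Gamma^*$ is either a closed path or an open path beginning and ending with partial edges; the dual complex is connected. The 3D toric code on $\Gamma$ has one qubit per face and stabilizer group generated by $B_e=\prod_{f\in\iota(e)}Z_f$ ($e\in C_1(\Gamma)$) and $A_\nu=\prod_{f\in\partial(\nu)}X_f$ ($\nu\in C_3(\Gamma)$). A logical operator is a Pauli operator commuting with all stabilizers but not in the stabilizer group (up to phase). A face path is a sequence of faces $(f_1,\dots,f_m)$ with pairwise distinct volumes $\nu_1,\dots,\nu_{m-1}$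 such that $f_i,f_{i+1}\in\partial(\nu_i)$. *)

theory Defs
  imports Main
begin

text \<open>A lattice is given by carrier sets V (vertices), E (edges), F (faces),
C (volumes), together with incidence data:
  ends e  : the set of vertices of edge e (one vertex for a partial edge, two otherwise),
  fbd f   : the set of boundary edges of face f,
  vbd nu  : the set of boundary faces of volume nu.\<close>

definition iota :: "'f set \<Rightarrow> ('f \<Rightarrow> 'e set) \<Rightarrow> 'e \<Rightarrow> 'f set" where
  "iota F fbd e = {f \<in> F. e \<in> fbd f}"

text \<open>Volumes containing a face in their boundary (dual endpoints of the dual edge).\<close>
definition face_vols :: "'c set \<Rightarrow> ('c \<Rightarrow> 'f set) \<Rightarrow> 'f \<Rightarrow> 'c set" where
  "face_vols C vbd f = {\<nu> \<in> C. f \<in> vbd \<nu>}"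

text \<open>Generic notion of paths in an incidence structure where each "edge" s has
a set of endpoints  ends s  (one endpoint = partial edge).\<close>
definition closed_path :: "('s \<Rightarrow> 'n set) \<Rightarrow> 's set \<Rightarrow> bool" where
  "closed_path ends S \<longleftrightarrow> (\<exists>es. distinct es \<and> set es = S \<and> es \<noteq> [] \<and>
      (\<forall>s\<in>S. card (ends s) = 2) \<and>
      (\<forall>i < length es. ends (es ! i) \<inter> ends (es ! ((i + 1) mod length es)) \<noteq> {}))"

definition open_path_partial :: "('s \<Rightarrow> 'n set) \<Rightarrow> 's set \<Rightarrow> bool" where
  "open_path_partial ends S \<longleftrightarrow> (\<exists>es. distinct es \<and> set es = S \<and> es \<noteq> [] \<and>
      card (ends (hd es)) = 1 \<and> card (ends (last es)) = 1 \<and>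
      (\<forall>i. Suc i < length es \<longrightarrow> ends (es ! i) \<inter> ends (es ! Suc i) \<noteq> {}))"

definition lattice3 ::
  "'v set \<Rightarrow> 'e set \<Rightarrow> 'f set \<Rightarrow> 'c set \<Rightarrow>
   ('e \<Rightarrow> 'v set) \<Rightarrow> ('f \<Rightarrow> 'e set) \<Rightarrow> ('c \<Rightarrow> 'f set) \<Rightarrow> bool" where
  "lattice3 V E F C ends fbd vbd \<longleftrightarrow>
     finite V \<and> finite E \<and> finite F \<and> finite C \<and>
     (\<forall>e\<in>E. ends e \<subseteq> V \<and> (card (ends e) = 1 \<or> card (ends e) = 2)) \<and>
     (\<forall>f\<in>F. fbd f \<subseteq> E) \<and>
     (\<forall>\<nu>\<in>C. vbd \<nu> \<subseteq> F) \<and>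
     \<comment> \<open>every face lies in the boundary of at most two volumes\<close>
     (\<forall>f\<in>F. card (face_vols C vbd f) \<le> 2) \<and>
     \<comment> \<open>(L2) for Gamma: face boundaries are closed paths or open paths ending in partial edges\<close>
     (\<forall>f\<in>F. closed_path ends (fbd f) \<or> open_path_partial ends (fbd f)) \<and>
     \<comment> \<open>(L2) for the dual: dual faces are edges e, with dual boundary iota e, dual edges
         are faces with dual endpoints the volumes containing them\<close>
     (\<forall>e\<in>E. closed_path (face_vols C vbd) (iota F fbd e) \<or>
             open_path_partial (face_vols C vbd) (iota F fbd e)) \<and>
     \<comment> \<open>Gamma is connected\<close>
     (\<forall>u\<in>V. \<forall>w\<in>V. (u, w) \<in> {(a, b). \<exists>e\<in>E. a \<in> ends e \<and> b \<in> ends e}\<^sup>*) \<and>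
     \<comment> \<open>the dual complex is connected\<close>
     (\<forall>\<mu>\<in>C. \<forall>\<nu>\<in>C. (\<mu>, \<nu>) \<in> {(a, b). \<exists>f\<in>F. a \<in> face_vols C vbd f \<and> b \<in> face_vols C vbd f}\<^sup>*)"

text \<open>A Pauli operator up to phase is its X-support and Z-support.\<close>
type_synonym 'f pauli = "'f set \<times> 'f set"

definition symdiff :: "'a set \<Rightarrow> 'a set \<Rightarrow> 'a set" where
  "symdiff A B = (A - B) \<union> (B - A)"

definition pmult :: "'f pauli \<Rightarrow> 'f pauli \<Rightarrow> 'f pauli" where
  "pmult p q = (symdiff (fst p) (fst q), symdiff (snd p) (snd q))"

definition pid :: "'f pauli" where "pid = ({}, {})"

definition Zop :: "'f \<Rightarrow> 'f pauli" where "Zop f = ({}, {f})"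

definition commutes :: "'f pauli \<Rightarrow> 'f pauli \<Rightarrow> bool" where
  "commutes p q \<longleftrightarrow> even (card (fst p \<inter> snd q) + card (snd p \<inter> fst q))"

inductive_set generated :: "'f pauli set \<Rightarrow> 'f pauli set" for G where
  gen_id: "pid \<in> generated G"
| gen_mult: "g \<in> G \<Longrightarrow> s \<in> generated G \<Longrightarrow> pmult g s \<in> generated G"

definition B_op :: "'f set \<Rightarrow> ('f \<Rightarrow> 'e set) \<Rightarrow> 'e \<Rightarrow> 'f pauli" where
  "B_op F fbd e = ({}, iota F fbd e)"

definition A_op :: "('c \<Rightarrow> 'f set) \<Rightarrow> 'c \<Rightarrow> 'f pauli" where
  "A_op vbd \<nu> = (vbd \<nu>, {})"

definition stabilizer_group ::
  "'e set \<Rightarrow> 'f set \<Rightarrow> 'c set \<Rightarrow> ('f \<Rightarrow> 'e set) \<Rightarrow> ('c \<Rightarrow> 'f set) \<Rightarrow> 'f pauli set" where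
  "stabilizer_group E F C fbd vbd =
     generated (B_op F fbd ` E \<union> A_op vbd ` C)"

definition face_path ::
  "'f set \<Rightarrow> 'c set \<Rightarrow> ('c \<Rightarrow> 'f set) \<Rightarrow> 'f list \<Rightarrow> 'c list \<Rightarrow> bool" where
  "face_path F C vbd fs vs \<longleftrightarrow>
     length fs \<ge> 1 \<and> length vs = length fs - 1 \<and> distinct vs \<and>
     set fs \<subseteq> F \<and> set vs \<subseteq> C \<and>
     (\<forall>i < length vs. fs ! i \<in> vbd (vs ! i) \<and> fs ! Suc i \<in> vbd (vs ! i))"

definition WZ :: "'f list \<Rightarrow> 'f pauli" where
  "WZ fs = foldr (\<lambda>f p. pmult (Zop f) p) fs pid"

end

theory Submission
  imports Defs
begin

lemma WZ_fst: "fst (WZ fs) = {}"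
  by (induction fs) (auto simp: WZ_def pmult_def Zop_def pid_def symdiff_def)

lemma WZ_snd_Cons: "snd (WZ (f # fs)) = symdiff {f} (snd (WZ fs))"
  by (simp add: WZ_def pmult_def Zop_def)

lemma WZ_finite: "finite (snd (WZ fs))"
  by (induction fs) (auto simp: WZ_def pmult_def Zop_def pid_def symdiff_def)

lemma WZ_parity: "even (card (snd (WZ fs) \<inter> S)) \<longleftrightarrow> even (length (filter (\<lambda>f. f \<in> S) fs))"
proof (induction fs)
  case Nil
  then show ?case by (simp add: WZ_def pid_def)
next
  case (Cons f fs)
  let ?Z = "snd (WZ fs)"
  have fin: "finite (?Z \<inter> S)" using WZ_finite by blast
  show ?case
  proof (cases "f \<in> S")
    case True
    show ?thesis
    proof (cases "f \<in> ?Z")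
      case True2: True
      have "snd (WZ (f # fs)) \<inter> S = (?Z \<inter> S) - {f}"
        using True True2 by (auto simp: WZ_snd_Cons symdiff_def)
      moreover have "card ((?Z \<inter> S) - {f}) + 1 = card (?Z \<inter> S)"
        using fin True True2
        by (metis IntI card_Suc_Diff1 Suc_eq_plus1)
      ultimately show ?thesis using Cons True by simp presburger
    next
      case False2: False
      have "snd (WZ (f # fs)) \<inter> S = insert f (?Z \<inter> S)"
        using True False2 by (auto simp: WZ_snd_Cons symdiff_def)
      moreover have "card (insert f (?Z \<inter> S)) = card (?Z \<inter> S) + 1"
        using fin False2 by simp
      ultimately show ?thesis using Cons True by simp
    qed
  next
    case False
    have "snd (WZ (f # fs)) \<inter> S = ?Z \<inter> S"
      using False by (auto simp: WZ_snd_Cons symdiff_def)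
    then show ?thesis using Cons False by simp
  qed
qed

lemma symdiff_parity:
  assumes "finite Z"
  shows "even (card (Z \<inter> symdiff A B)) \<longleftrightarrow> (even (card (Z \<inter> A)) \<longleftrightarrow> even (card (Z \<inter> B)))"
proof -
  let ?X = "Z \<inter> A" and ?Y = "Z \<inter> B"
  have fx: "finite ?X" "finite ?Y" using assms by auto
  have eq: "Z \<inter> symdiff A B = (?X \<union> ?Y) - (?X \<inter> ?Y)" by (auto simp: symdiff_def)
  have "card ((?X \<union> ?Y) - (?X \<inter> ?Y)) = card (?X \<union> ?Y) - card (?X \<inter> ?Y)"
    using fx by (intro card_Diff_subset) auto
  moreover have "card ?X + card ?Y = card (?X \<union> ?Y) + card (?X \<inter> ?Y)"
    using fx card_Un_Int by blast
  moreover have "card (?X \<inter> ?Y) \<le> card ?X" using fx by (intro card_mono) auto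
  moreover have "card (?X \<inter> ?Y) \<le> card ?Y" using fx by (intro card_mono) auto
  ultimately show ?thesis unfolding eq by presburger
qed

theorem lemma2:
  fixes V :: "'v set" and E :: "'e set" and F :: "'f set" and C :: "'c set"
    and ends :: "'e \<Rightarrow> 'v set" and fbd :: "'f \<Rightarrow> 'e set" and vbd :: "'c \<Rightarrow> 'f set"
    and fs :: "'f list" and vs :: "'c list" and \<nu>0 :: 'c
  assumes "lattice3 V E F C ends fbd vbd"
    and "face_path F C vbd fs vs"
    and "length fs \<ge> 2"
    and "\<nu>0 \<in> C" and "\<nu>0 \<notin> set vs"
    and "hd fs \<in> vbd \<nu>0" and "last fs \<in> vbd \<nu>0"
  shows "\<forall>s \<in> stabilizer_group E F C fbd vbd. commutes (WZ fs) s"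
proof -
  define m where "m = length fs"
  define as where "as = \<nu>0 # vs"
  define bs where "bs = vs @ [\<nu>0]"
  have lat1: "finite C"
    using assms(1) unfolding lattice3_def by (elim conjE) assumption
  have lat2: "\<forall>f\<in>F. card (face_vols C vbd f) \<le> 2"
    using assms(1) unfolding lattice3_def by (elim conjE) assumption
  note lat = lat1 lat2
  have fp: "length vs = m - 1" "distinct vs" "set fs \<subseteq> F" "set vs \<subseteq> C"
     "\<forall>i < length vs. fs ! i \<in> vbd (vs ! i) \<and> fs ! Suc i \<in> vbd (vs ! i)"
    using assms(2) unfolding face_path_def m_def by auto
  have m2: "m \<ge> 2" using assms(3) m_def by simp
  have las: "length as = m" "length bs = m" using fp m2 by (auto simp: as_def bs_def)
  have asC: "set as \<subseteq> C" "set bs \<subseteq> C" using fp assms(4) by (auto simp: as_def bs_def)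
  have key: "(fs ! i \<in> vbd \<nu> \<longleftrightarrow> \<nu> = as ! i \<or> \<nu> = bs ! i) \<and> as ! i \<noteq> bs ! i"
    if i: "i < m" and nu: "\<nu> \<in> C" for i \<nu>
  proof -
    have ina: "fs ! i \<in> vbd (as ! i)"
    proof (cases i)
      case 0
      then show ?thesis using assms(6) m2 m_def hd_conv_nth[of fs] by (cases fs) (auto simp: as_def)
    next
      case (Suc j)
      then show ?thesis using fp(5) fp(1) i by (simp add: as_def)
    qed
    have inb: "fs ! i \<in> vbd (bs ! i)"
    proof (cases "i = m - 1")
      case True
      have "fs \<noteq> []" using m2 m_def by auto
      then have "last fs = fs ! (m - 1)" using m_def by (simp add: last_conv_nth)
      then show ?thesis using True assms(7) fp(1)
        by (simp add: bs_def nth_append)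
    next
      case False
      then have "i < length vs" using fp(1) i by simp
      then show ?thesis using fp(5) by (simp add: bs_def nth_append)
    qed
    have neq: "as ! i \<noteq> bs ! i"
    proof (cases i)
      case 0
      have "0 < length vs" using m2 fp(1) by simp
      then have "vs ! 0 \<in> set vs" by (rule nth_mem)
      then show ?thesis using 0 assms(5) by (auto simp: as_def bs_def nth_append)
    next
      case (Suc j)
      show ?thesis
      proof (cases "i = m - 1")
        case True
        then have j: "j < length vs" "i = length vs" using Suc fp(1) i by auto
        then have "vs ! j \<in> set vs" by (intro nth_mem)
        then show ?thesis using Suc j assms(5) by (auto simp: as_def bs_def nth_append)
      next
        case False
        then have j: "j < length vs" "Suc j < length vs" using Suc i fp(1) by auto
        then have "vs ! j \<noteq> vs ! Suc j" using fp(2) by (simp add: nth_eq_iff_index_eq)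
        then show ?thesis using Suc j by (simp add: as_def bs_def nth_append)
      qed
    qed
    have fF: "fs ! i \<in> F" using fp(3) i m_def by auto
    have abC: "as ! i \<in> C" "bs ! i \<in> C" using asC las i by auto
    have sub: "{as ! i, bs ! i} \<subseteq> face_vols C vbd (fs ! i)"
      using ina inb abC by (auto simp: face_vols_def)
    have fin: "finite (face_vols C vbd (fs ! i))" using lat(1) by (simp add: face_vols_def)
    have c2: "card {as ! i, bs ! i} = 2" using neq by simp
    have "card (face_vols C vbd (fs ! i)) \<le> 2" using lat(2) fF by blast
    then have "{as ! i, bs ! i} = face_vols C vbd (fs ! i)"
      using card_seteq[OF fin sub] c2 by simp
    then show ?thesis using nu neq by (auto simp: face_vols_def)
  qed
  have even_vol: "even (length (filter (\<lambda>f. f \<in> vbd \<nu>) fs))" if nu: "\<nu> \<in> C" for \<nu>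
  proof -
    have "length (filter (\<lambda>f. f \<in> vbd \<nu>) fs) = card {i. i < m \<and> fs ! i \<in> vbd \<nu>}"
      by (simp add: length_filter_conv_card m_def)
    also have "{i. i < m \<and> fs ! i \<in> vbd \<nu>} = {i. i < m \<and> as ! i = \<nu>} \<union> {i. i < m \<and> bs ! i = \<nu>}"
      using key nu by auto
    also have "card \<dots> = card {i. i < m \<and> as ! i = \<nu>} + card {i. i < m \<and> bs ! i = \<nu>}"
      using key nu by (intro card_Un_disjoint) fastforce+
    also have "\<dots> = length (filter (\<lambda>x. x = \<nu>) as) + length (filter (\<lambda>x. x = \<nu>) bs)"
      using las by (simp add: length_filter_conv_card eq_commute)
    also have "length (filter (\<lambda>x. x = \<nu>) as) = length (filter (\<lambda>x. x = \<nu>) bs)"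
      by (simp add: as_def bs_def)
    finally show ?thesis by simp
  qed
  show ?thesis
    unfolding stabilizer_group_def
  proof
    fix s assume "s \<in> generated (B_op F fbd ` E \<union> A_op vbd ` C)"
    then show "commutes (WZ fs) s"
    proof (induction rule: generated.induct)
      case gen_id
      then show ?case by (simp add: commutes_def pid_def WZ_fst)
    next
      case (gen_mult g s)
      have eg: "even (card (snd (WZ fs) \<inter> fst g))"
        using gen_mult.hyps(1)
      proof
        assume "g \<in> B_op F fbd ` E" then show ?thesis by (auto simp: B_op_def)
      next
        assume "g \<in> A_op vbd ` C"
        then obtain \<nu> where "\<nu> \<in> C" "g = A_op vbd \<nu>" by auto
        then show ?thesis using even_vol[of \<nu>] WZ_parity[of fs "vbd \<nu>"] by (simp add: A_op_def)
      qed
      have es: "even (card (snd (WZ fs) \<inter> fst s))"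
        using gen_mult.IH by (simp add: commutes_def WZ_fst)
      have "even (card (snd (WZ fs) \<inter> fst (pmult g s)))"
        using symdiff_parity[OF WZ_finite[of fs], of "fst g" "fst s"] eg es by (simp add: pmult_def)
      then show ?case by (simp add: commutes_def WZ_fst)
    qed
  qed
qed

end
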